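(* Let $I_1,I_2,J$ be intervals of $B$. Suppose $I_1$ and $I_2$ are of the same type, and $J$ is not of the same type as $I_1$ nor as $I_2$. Then every composition of morphisms $k_{I_1}\to k_J\to k_{I_2}$ is zero.
   Context: Let $k$ be a field. The bipath poset $B$ has underlying set $(\mathbb{R}\times\{1,2\})\sqcup\{-\infty,+\infty\}$. Its order is: $x\le y$ iff $x=-\infty$, or $y=+\infty$, or $x=(s,i)$, $y=(t,i)$ with the same $i$ and $s\le t$. $B$-persistence modules are functors from $B$ (as a category) to $k$-vector spaces, with morphisms the natural transformations. An interval of $B$ is a nonempty convex and connected subset (convex: $p,q\in I$, $p\le r\le q$ imply $r\in I$; connected: any two elements are joined by a finite sequence in $I$ with consecutive ones comparable). The interval module $k_I$ is $k$ on $I$ and $0$ elsewhere, with identity maps within $I$ and zero maps otherwise. The types of intervals are: - $\mathcal{U}$: intervals contained in $\mathbb{R}\times\{1\}$; - $\mathcal{D}$: intervals contained in $\mathbb{R}\times\{2\}$; - $\mathcal{B}=\{B\}$; - $\mathcal{L}$: intervals $\neq B$ containing $-\infty$; - $\mathcal{R}$: intervals $\neq B$ containing $+\infty$. Two intervals are of the same type if they lie in the same one of these five sets. *)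

theory Defs
  imports Complex_Main
begin

text \<open>Points: NegInf (= -infinity), PosInf (= +infinity), and P s i for (s,i) in R x {1,2};
  the second component is encoded as a boolean: True for 1, False for 2.\<close>

datatype bpt = NegInf | PosInf | P real bool

fun ble :: "bpt \<Rightarrow> bpt \<Rightarrow> bool" where
  "ble NegInf y = True"
| "ble x PosInf = True"
| "ble (P s i) (P t j) = (i = j \<and> s \<le> t)"
| "ble _ _ = False"

definition convex_B :: "bpt set \<Rightarrow> bool" where
  "convex_B I \<longleftrightarrow> (\<forall>p q r. p \<in> I \<longrightarrow> q \<in> I \<longrightarrow> ble p r \<longrightarrow> ble r q \<longrightarrow> r \<in> I)"

definition connected_B :: "bpt set \<Rightarrow> bool" where
  "connected_B I \<longleftrightarrow> (\<forall>p\<in>I. \<forall>q\<in>I.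
      (\<lambda>a b. a \<in> I \<and> b \<in> I \<and> (ble a b \<or> ble b a))\<^sup>*\<^sup>* p q)"

definition interval_B :: "bpt set \<Rightarrow> bool" where
  "interval_B I \<longleftrightarrow> I \<noteq> {} \<and> convex_B I \<and> connected_B I"

definition typeU :: "bpt set \<Rightarrow> bool" where
  "typeU I \<longleftrightarrow> interval_B I \<and> I \<subseteq> {P s True | s. True}"
definition typeD :: "bpt set \<Rightarrow> bool" where
  "typeD I \<longleftrightarrow> interval_B I \<and> I \<subseteq> {P s False | s. True}"
definition typeB :: "bpt set \<Rightarrow> bool" where
  "typeB I \<longleftrightarrow> I = UNIV"
definition typeL :: "bpt set \<Rightarrow> bool" where
  "typeL I \<longleftrightarrow> interval_B I \<and> I \<noteq> UNIV \<and> NegInf \<in> I"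
definition typeR :: "bpt set \<Rightarrow> bool" where
  "typeR I \<longleftrightarrow> interval_B I \<and> I \<noteq> UNIV \<and> PosInf \<in> I"

definition same_type :: "bpt set \<Rightarrow> bpt set \<Rightarrow> bool" where
  "same_type I J \<longleftrightarrow> (typeU I \<and> typeU J) \<or> (typeD I \<and> typeD J) \<or> (typeB I \<and> typeB J)
     \<or> (typeL I \<and> typeL J) \<or> (typeR I \<and> typeR J)"

text \<open>The interval module k_I: at x the space is k (as a k-vector space) if x in I, and
  the zero subspace {0} of k otherwise; the structure map for x <= y is the identity if
  x, y in I and zero otherwise.\<close>

definition ival_space :: "bpt set \<Rightarrow> bpt \<Rightarrow> 'k::field set" where
  "ival_space I x = (if x \<in> I then UNIV else {0})"

definition ival_map :: "bpt set \<Rightarrow> bpt \<Rightarrow> bpt \<Rightarrow> 'k::field \<Rightarrow> 'k" where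
  "ival_map I x y = (if x \<in> I \<and> y \<in> I then id else (\<lambda>_. 0))"

definition ival_morphism :: "bpt set \<Rightarrow> bpt set \<Rightarrow> (bpt \<Rightarrow> 'k::field \<Rightarrow> 'k) \<Rightarrow> bool" where
  "ival_morphism I J f \<longleftrightarrow>
     (\<forall>x. (\<forall>v \<in> ival_space I x. f x v \<in> ival_space J x)
        \<and> (\<forall>v \<in> ival_space I x. \<forall>w \<in> ival_space I x. f x (v + w) = f x v + f x w)
        \<and> (\<forall>a. \<forall>v \<in> ival_space I x. f x (a * v) = a * f x v))
   \<and> (\<forall>x y. ble x y \<longrightarrow> (\<forall>v \<in> ival_space I x.
        f y (ival_map I x y v) = ival_map J x y (f x v)))"

definition comp_is_zero :: "bpt set \<Rightarrow> (bpt \<Rightarrow> 'k::field \<Rightarrow> 'k) \<Rightarrow> (bpt \<Rightarrow> 'k \<Rightarrow> 'k) \<Rightarrow> bool" where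
  "comp_is_zero I f g \<longleftrightarrow> (\<forall>x. \<forall>v \<in> ival_space I x. g x (f x v) = 0)"

end

theory Submission
  imports Defs
begin

lemma zero_in_space: "0 \<in> ival_space I x"
  by (simp add: ival_space_def)

lemma morph_zero:
  assumes "ival_morphism I J f" shows "f x 0 = 0"
proof -
  have "f x (0 * 0) = 0 * f x 0"
    using assms zero_in_space[of I x] unfolding ival_morphism_def by blast
  then show ?thesis by simp
qed

lemma morph_A:
  assumes m: "ival_morphism I J f" and "x \<in> I" "ble x y" "y \<in> J" "y \<notin> I" "x \<in> J"
  shows "f x v = 0"
proof -
  have "v \<in> ival_space I x" using assms by (simp add: ival_space_def)
  then have "f y (ival_map I x y v) = ival_map J x y (f x v)"
    using m assms(3) unfolding ival_morphism_def by blast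
  then have "f y 0 = f x v" using assms by (simp add: ival_map_def)
  then show ?thesis using morph_zero[OF m] by simp
qed

lemma morph_B:
  assumes m: "ival_morphism I J f" and "ble y x" "y \<in> I" "y \<notin> J" "x \<in> I"
  shows "f x v = 0"
proof -
  have "v \<in> ival_space I y" using assms by (simp add: ival_space_def)
  then have "f x (ival_map I y x v) = ival_map J y x (f y v)"
    using m assms(2) unfolding ival_morphism_def by blast
  then show ?thesis using assms by (simp add: ival_map_def)
qed

lemma both_inf_UNIV:
  assumes "interval_B I" "NegInf \<in> I" "PosInf \<in> I" shows "I = UNIV"
proof -
  have "\<And>r. r \<in> I"
  proof -
    fix r
    have "ble NegInf r" by simp
    moreover have "ble r PosInf" by (cases r) auto
    ultimately show "r \<in> I" using assms unfolding interval_B_def convex_B_def by blast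
  qed
  then show ?thesis by blast
qed

lemma chain_line:
  assumes "(\<lambda>a b. a \<in> I \<and> b \<in> I \<and> (ble a b \<or> ble b a))\<^sup>*\<^sup>* p q"
    and "NegInf \<notin> I" "PosInf \<notin> I" "p = P s i"
  shows "\<exists>t. q = P t i"
  using assms
proof (induction arbitrary: s rule: rtranclp_induct)
  case base then show ?case by blast
next
  case (step y z)
  then obtain t where y: "y = P t i" by blast
  from step have "z \<in> I" "ble y z \<or> ble z y" by auto
  with step(4,5) y show ?case by (cases z) auto
qed

lemma line_sub:
  assumes "interval_B I" "NegInf \<notin> I" "PosInf \<notin> I" "P s i \<in> I"
  shows "I \<subseteq> {P t i | t. True}"
proof
  fix q assume "q \<in> I"
  then have "(\<lambda>a b. a \<in> I \<and> b \<in> I \<and> (ble a b \<or> ble b a))\<^sup>*\<^sup>* (P s i) q"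
    using assms unfolding interval_B_def connected_B_def by blast
  then show "q \<in> {P t i | t. True}" using chain_line assms by blast
qed

lemma type_eq:
  assumes "interval_B I1" "interval_B J" "x \<in> I1" "x \<in> J"
    and "(NegInf \<in> I1) = (NegInf \<in> J)" "(PosInf \<in> I1) = (PosInf \<in> J)"
  shows "same_type J I1"
proof (cases "NegInf \<in> I1")
  case True
  then show ?thesis
  proof (cases "PosInf \<in> I1")
    case True
    then show ?thesis using \<open>NegInf \<in> I1\<close> assms both_inf_UNIV
      unfolding same_type_def typeB_def by metis
  next
    case False
    then have "I1 \<noteq> UNIV" "J \<noteq> UNIV" using assms by auto
    then show ?thesis using True False assms unfolding same_type_def typeL_def by auto
  qed
next
  case False
  then show ?thesis
  proof (cases "PosInf \<in> I1")
    case True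
    then have "I1 \<noteq> UNIV" "J \<noteq> UNIV" using assms False by auto
    then show ?thesis using True False assms unfolding same_type_def typeR_def by auto
  next
    case F2: False
    obtain s i where x: "x = P s i" using assms False F2 by (cases x) auto
    have s1: "I1 \<subseteq> {P t i | t. True}" using line_sub assms False F2 x by metis
    have s2: "J \<subseteq> {P t i | t. True}" using line_sub assms False F2 x by metis
    show ?thesis
    proof (cases i)
      case True
      then show ?thesis using s1 s2 assms unfolding same_type_def typeU_def by auto
    next
      case False
      then show ?thesis using s1 s2 assms unfolding same_type_def typeD_def by auto
    qed
  qed
qed

lemma same_inf:
  assumes "same_type I1 I2"
  shows "(NegInf \<in> I1) = (NegInf \<in> I2) \<and> (PosInf \<in> I1) = (PosInf \<in> I2)"
  using assms unfolding same_type_def typeU_def typeD_def typeB_def typeL_def typeR_def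
  by (auto dest: both_inf_UNIV)

theorem corollary4p5:
  fixes I1 I2 J :: "bpt set"
    and f :: "bpt \<Rightarrow> 'k::field \<Rightarrow> 'k" and g :: "bpt \<Rightarrow> 'k \<Rightarrow> 'k"
  assumes "interval_B I1" and "interval_B I2" and "interval_B J"
    and "same_type I1 I2"
    and "\<not> same_type J I1" and "\<not> same_type J I2"
    and "ival_morphism I1 J f" and "ival_morphism J I2 g"
  shows "comp_is_zero I1 f g"
  unfolding comp_is_zero_def
proof (intro allI ballI)
  fix x and v :: 'k
  assume v: "v \<in> ival_space I1 x"
  have fsp: "f x v \<in> ival_space J x" using assms(7) v unfolding ival_morphism_def by blast
  show "g x (f x v) = 0"
  proof (cases "x \<in> I1 \<and> x \<in> J \<and> x \<in> I2")
    case False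
    then consider "x \<notin> I1" | "x \<notin> J" | "x \<notin> I2" by blast
    then show ?thesis
    proof cases
      case 1
      then have "v = 0" using v by (simp add: ival_space_def)
      then show ?thesis using morph_zero[OF assms(7)] morph_zero[OF assms(8)] by simp
    next
      case 2
      then have "f x v = 0" using fsp by (simp add: ival_space_def)
      then show ?thesis using morph_zero[OF assms(8)] by simp
    next
      case 3
      have "g x (f x v) \<in> ival_space I2 x"
        using assms(8) fsp unfolding ival_morphism_def by blast
      then show ?thesis using 3 by (simp add: ival_space_def)
    qed
  next
    case True
    have si: "(NegInf \<in> I1) = (NegInf \<in> I2) \<and> (PosInf \<in> I1) = (PosInf \<in> I2)"
      using same_inf[OF assms(4)] .
    have c: "(PosInf \<in> J \<and> PosInf \<notin> I1) \<or> (NegInf \<in> I1 \<and> NegInf \<notin> J)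
        \<or> (NegInf \<in> J \<and> NegInf \<notin> I2) \<or> (PosInf \<in> I2 \<and> PosInf \<notin> J)"
    proof (rule ccontr)
      assume "\<not> ?thesis"
      then have "(NegInf \<in> I1) = (NegInf \<in> J)" "(PosInf \<in> I1) = (PosInf \<in> J)"
        using si by blast+
      then have "same_type J I1" using type_eq assms(1,3) True by blast
      then show False using assms(5) by blast
    qed
    have bx1: "ble x PosInf" by (cases x) auto
    have bx2: "ble NegInf x" by simp
    from c consider "PosInf \<in> J \<and> PosInf \<notin> I1" | "NegInf \<in> I1 \<and> NegInf \<notin> J"
      | "NegInf \<in> J \<and> NegInf \<notin> I2" | "PosInf \<in> I2 \<and> PosInf \<notin> J" by blast
    then show ?thesis
    proof cases
      case 1
      then have "f x v = 0" using morph_A[OF assms(7)] True bx1 by blast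
      then show ?thesis using morph_zero[OF assms(8)] by simp
    next
      case 2
      then have "f x v = 0" using morph_B[OF assms(7)] True bx2 by blast
      then show ?thesis using morph_zero[OF assms(8)] by simp
    next
      case 3
      then show ?thesis using morph_B[OF assms(8)] True bx2 by blast
    next
      case 4
      then show ?thesis using morph_A[OF assms(8)] True bx1 by blast
    qed
  qed
qed

end
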